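(* Let $n\ge 3$ be an integer and let $\{D_I\}_{I\in\binom{[n]}{n-1}}$ be a family of positive real numbers, where $[n]=\{1,\dots,n\}$; write $D_{\hat i}=D_{[n]\setminus\{i\}}$ for $i\in[n]$. There exists a positive-weighted tree $\mathcal T=(T,w)$ with vertex set exactly $V(T)=[n]$ such that $D_{\hat i}(\mathcal T)=D_{\hat i}$ for all $i\in[n]$ if and only if the following three conditions hold: (i) $(n-2)D_{\hat i}\le \sum_{j\in[n]\setminus\{i\}} D_{\hat j}$ for every $i\in[n]$, and at most one of these inequalities is an equality; (ii) either one of the inequalities in (i) is an equality, or the maximum of $\{D_{\hat i}\}_{i\in[n]}$ is attained by at least two indices $i$; (iii) the maximum of $\{D_{\hat i}\}_{i\in[n]}$ is attained by at most $n-2$ indices $i$.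
   Context: All graphs are simple and finite. A positive-weighted graph $\mathcal G=(G,w)$ is a graph $G$ with a function $w:E(G)\to\mathbb R_{>0}$; for a subgraph $G'$, $w(G')$ is the sum of the weights of the edges of $G'$. For distinct vertices $i_1,\dots,i_k$ of $G$, $D_{\{i_1,\dots,i_k\}}(\mathcal G)$ is the minimum of $w(R)$ over all connected subgraphs $R$ of $G$ whose vertex set contains $i_1,\dots,i_k$. We write $D_{\hat i}(\mathcal G)=D_{[n]\setminus\{i\}}(\mathcal G)$. *)

theory Defs
  imports Complex_Main
begin

definition simple_graph :: "'a set \<Rightarrow> 'a set set \<Rightarrow> bool" where
  "simple_graph V E \<longleftrightarrow> finite V \<and> (\<forall>e\<in>E. e \<subseteq> V \<and> card e = 2)"

definition adj :: "'a set set \<Rightarrow> ('a \<times> 'a) set" where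
  "adj E = {(u, v). {u, v} \<in> E}"

definition connected_graph :: "'a set \<Rightarrow> 'a set set \<Rightarrow> bool" where
  "connected_graph V E \<longleftrightarrow> simple_graph V E \<and> V \<noteq> {} \<and>
     (\<forall>u\<in>V. \<forall>v\<in>V. (u, v) \<in> (adj E)\<^sup>*)"

definition is_cycle :: "'a set set \<Rightarrow> 'a list \<Rightarrow> bool" where
  "is_cycle E cs \<longleftrightarrow> length cs \<ge> 3 \<and> distinct cs \<and>
     (\<forall>i < length cs - 1. {cs ! i, cs ! Suc i} \<in> E) \<and> {last cs, hd cs} \<in> E"

definition is_tree :: "'a set \<Rightarrow> 'a set set \<Rightarrow> bool" where
  "is_tree V E \<longleftrightarrow> connected_graph V E \<and> \<not> (\<exists>cs. is_cycle E cs)"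

definition connected_subgraph :: "'a set \<Rightarrow> 'a set set \<Rightarrow> 'a set \<Rightarrow> 'a set set \<Rightarrow> bool" where
  "connected_subgraph V E VR ER \<longleftrightarrow> VR \<subseteq> V \<and> ER \<subseteq> E \<and> connected_graph VR ER"

definition Dmin :: "'a set \<Rightarrow> 'a set set \<Rightarrow> ('a set \<Rightarrow> real) \<Rightarrow> 'a set \<Rightarrow> real" where
  "Dmin V E w S = Min {sum w ER | VR ER. connected_subgraph V E VR ER \<and> S \<subseteq> VR}"

end

theory Submission
  imports Defs "HOL-Library.Transitive_Closure_Table"
begin

lemma adj_iff: "(u,v) \<in> adj E \<longleftrightarrow> {u,v} \<in> E"
  by (simp add: adj_def)

lemma sg_edge_neq: "simple_graph V E \<Longrightarrow> {a,b} \<in> E \<Longrightarrow> a \<noteq> b"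
  unfolding simple_graph_def by force

lemma sg_edge_in: "simple_graph V E \<Longrightarrow> {a,b} \<in> E \<Longrightarrow> a \<in> V \<and> b \<in> V"
  unfolding simple_graph_def by blast

lemma sg_edge_form: "simple_graph V E \<Longrightarrow> e \<in> E \<Longrightarrow> v \<in> e \<Longrightarrow> \<exists>u. u \<noteq> v \<and> e = {v,u}"
  unfolding simple_graph_def by (metis card_2_iff empty_iff insert_commute insert_iff)

lemma sg_finite: "simple_graph V E \<Longrightarrow> finite E"
  unfolding simple_graph_def by (meson PowI finite_Pow_iff finite_subset subsetI)

lemma adj_rtrancl_mono: "F \<subseteq> E \<Longrightarrow> (u,v) \<in> (adj F)\<^sup>* \<Longrightarrow> (u,v) \<in> (adj E)\<^sup>*"
proof -
  assume "F \<subseteq> E" "(u,v) \<in> (adj F)\<^sup>*"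
  moreover have "adj F \<subseteq> adj E" using \<open>F \<subseteq> E\<close> by (auto simp: adj_def)
  ultimately show ?thesis using rtrancl_mono by blast
qed

lemma rtrancl_path_nth:
  "rtrancl_path r a xs b \<Longrightarrow> last (a#xs) = b \<and> (\<forall>i<length xs. r ((a#xs)!i) ((a#xs)!Suc i))"
proof (induction rule: rtrancl_path.induct)
  case (base x) then show ?case by simp
next
  case (step x y ys z)
  then show ?case by (auto simp: less_Suc_eq_0_disj)
qed

lemma path_of_rtrancl:
  assumes "(a,b) \<in> (adj F)\<^sup>*"
  shows "\<exists>p. p \<noteq> [] \<and> hd p = a \<and> last p = b \<and> distinct p \<and> (\<forall>i<length p - 1. {p!i, p!Suc i} \<in> F)"
proof -
  have "(\<lambda>x y. (x,y) \<in> adj F)\<^sup>*\<^sup>* a b" using assms by (simp add: rtranclp_rtrancl_eq)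
  then obtain xs where "rtrancl_path (\<lambda>x y. (x,y) \<in> adj F) a xs b"
    using rtranclp_eq_rtrancl_path by metis
  then obtain xs' where p: "rtrancl_path (\<lambda>x y. (x,y) \<in> adj F) a xs' b" "distinct (a#xs')"
    using rtrancl_path_distinct by metis
  from rtrancl_path_nth[OF p(1)] p(2) show ?thesis
    by (intro exI[of _ "a#xs'"]) (auto simp: adj_iff)
qed

lemma tree_no_cycle: "is_tree V E \<Longrightarrow> is_cycle E cs \<Longrightarrow> False"
  unfolding is_tree_def by blast

lemma K1:
  assumes T: "is_tree V E" and e: "{a,b} \<in> E" and p: "(a,b) \<in> (adj (E - {{a,b}}))\<^sup>*"
  shows False
proof -
  have sg: "simple_graph V E" using T unfolding is_tree_def connected_graph_def by blast
  have ab: "a \<noteq> b" using sg_edge_neq[OF sg e] .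
  obtain p where p: "p \<noteq> []" "hd p = a" "last p = b" "distinct p"
    "\<forall>i<length p - 1. {p!i, p!Suc i} \<in> E - {{a,b}}"
    using path_of_rtrancl[OF p] by (auto simp: adj_iff)
  have l2: "length p \<ge> 2"
  proof -
    have "length p \<noteq> 1" using p ab by (cases p) auto
    moreover have "length p \<noteq> 0" using p by auto
    ultimately show ?thesis by linarith
  qed
  have l3: "length p \<ge> 3"
  proof (rule ccontr)
    assume "\<not> ?thesis"
    then have "length p = 2" using l2 by simp
    then obtain x y where "p = [x,y]"
      by (metis (no_types, opaque_lifting) One_nat_def Suc_1 length_0_conv length_Suc_conv)
    then show False using p(2,3) p(5) by auto
  qed
  have "is_cycle E p"
    unfolding is_cycle_def using l3 p e by (auto simp: insert_commute)
  then show False using tree_no_cycle[OF T] by blast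
qed

lemma tree_sg: "is_tree V E \<Longrightarrow> simple_graph V E"
  unfolding is_tree_def connected_graph_def by blast

lemma tree_conn: "is_tree V E \<Longrightarrow> u\<in>V \<Longrightarrow> v\<in>V \<Longrightarrow> (u,v) \<in> (adj E)\<^sup>*"
  unfolding is_tree_def connected_graph_def by blast

lemma sub_edge_in:
  assumes T: "is_tree V E" and S: "connected_subgraph V E VR ER" and VR: "V - {v} \<subseteq> VR"
    and e: "e \<in> E" and ve: "v \<notin> e"
  shows "e \<in> ER"
proof (rule ccontr)
  assume ne: "e \<notin> ER"
  have sg: "simple_graph V E" using tree_sg[OF T] .
  have "card e = 2" using sg e unfolding simple_graph_def by blast
  then obtain a b where ab: "e = {a,b}" "a \<noteq> b" by (meson card_2_iff)
  have eE: "{a,b} \<in> E" using e ab by simp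
  have "a \<in> V" "b \<in> V" using sg_edge_in[OF sg eE] by auto
  moreover have "a \<noteq> v" "b \<noteq> v" using ve ab by auto
  ultimately have "a \<in> VR" "b \<in> VR" using VR by auto
  moreover have "\<forall>u\<in>VR. \<forall>v\<in>VR. (u, v) \<in> (adj ER)\<^sup>*"
    using S unfolding connected_subgraph_def connected_graph_def by simp
  ultimately have "(a,b) \<in> (adj ER)\<^sup>*" by simp
  moreover have "ER \<subseteq> E - {{a,b}}"
  proof -
    have "ER \<subseteq> E" using S unfolding connected_subgraph_def by simp
    then show ?thesis using ne ab by auto
  qed
  ultimately have "(a,b) \<in> (adj (E - {{a,b}}))\<^sup>*" using adj_rtrancl_mono by metis
  then show False using K1[OF T eE] by simp
qed

lemma Dmin_eq:
  assumes sg: "simple_graph V E" and c0: "connected_subgraph V E V0 E0" and S0: "S \<subseteq> V0"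
    and lb: "\<And>VR ER. connected_subgraph V E VR ER \<Longrightarrow> S \<subseteq> VR \<Longrightarrow> sum w E0 \<le> sum w ER"
  shows "Dmin V E w S = sum w E0"
  unfolding Dmin_def
proof (rule Min_eqI)
  have "{sum w ER |VR ER. connected_subgraph V E VR ER \<and> S \<subseteq> VR} \<subseteq> (sum w) ` Pow E"
    unfolding connected_subgraph_def by blast
  moreover have "finite E" using sg_finite[OF sg] .
  ultimately show "finite {sum w ER |VR ER. connected_subgraph V E VR ER \<and> S \<subseteq> VR}"
    by (meson finite_Pow_iff finite_imageI finite_subset)
  show "\<And>y. y \<in> {sum w ER |VR ER. connected_subgraph V E VR ER \<and> S \<subseteq> VR} \<Longrightarrow> sum w E0 \<le> y"
    using lb by blast
  show "sum w E0 \<in> {sum w ER |VR ER. connected_subgraph V E VR ER \<and> S \<subseteq> VR}"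
    using c0 S0 by blast
qed

lemma A1:
  assumes T: "is_tree V E" and v: "v \<in> V" and x: "{v,x} \<in> E" and y: "{v,y} \<in> E" and xy: "x \<noteq> y"
  shows "Dmin V E w (V - {v}) = sum w E"
proof (rule Dmin_eq)
  have sg: "simple_graph V E" using tree_sg[OF T] .
  show "simple_graph V E" by fact
  show "connected_subgraph V E V E" using T unfolding connected_subgraph_def is_tree_def by simp
  show "V - {v} \<subseteq> V" by blast
  fix VR ER assume S: "connected_subgraph V E VR ER" and VR: "V - {v} \<subseteq> VR"
  have ERE: "ER \<subseteq> E" using S unfolding connected_subgraph_def by simp
  have conn: "\<forall>u\<in>VR. \<forall>v\<in>VR. (u, v) \<in> (adj ER)\<^sup>*"
    using S unfolding connected_subgraph_def connected_graph_def by simp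
  have "E \<subseteq> ER"
  proof
    fix e assume e: "e \<in> E"
    show "e \<in> ER"
    proof (cases "v \<in> e")
      case False
      then show ?thesis using sub_edge_in[OF T S VR e] by simp
    next
      case True
      obtain a where a: "a \<noteq> v" "e = {v,a}" using sg_edge_form[OF sg e True] by metis
      have eE: "{a,v} \<in> E" using e a by (simp add: insert_commute)
      show ?thesis
      proof (rule ccontr)
        assume ne: "e \<notin> ER"
        define c where "c = (if x \<noteq> a then x else y)"
        have ca: "c \<noteq> a" using xy unfolding c_def by auto
        have cE: "{v,c} \<in> E" using x y unfolding c_def by auto
        have cv: "c \<noteq> v" using sg_edge_neq[OF sg cE] by simp
        have "a \<in> V" using sg_edge_in[OF sg eE] by simp
        have "c \<in> V" using sg_edge_in[OF sg cE] by simp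
        have "a \<in> VR" "c \<in> VR" using VR \<open>a \<in> V\<close> \<open>c \<in> V\<close> a(1) cv by auto
        then have "(a,c) \<in> (adj ER)\<^sup>*" using conn by simp
        moreover have "ER \<subseteq> E - {e}" using ERE ne by auto
        ultimately have 1: "(a,c) \<in> (adj (E - {e}))\<^sup>*" using adj_rtrancl_mono by metis
        have "{c,v} \<noteq> {v,a}" using ca cv by (auto simp: doubleton_eq_iff)
        then have "{c,v} \<in> E - {e}" using cE a(2) by (auto simp: insert_commute)
        then have "(c,v) \<in> adj (E - {e})" by (simp add: adj_iff)
        with 1 have "(a,v) \<in> (adj (E - {e}))\<^sup>*" by simp
        moreover have "e = {a,v}" using a(2) by (simp add: insert_commute)
        ultimately have "(a,v) \<in> (adj (E - {{a,v}}))\<^sup>*" by simp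
        then show False using K1[OF T eE] by simp
      qed
    qed
  qed
  then have "ER = E" using ERE by simp
  then show "sum w E \<le> sum w ER" by simp
qed

lemma leaf_remove_conn:
  assumes sg: "simple_graph V E" and e0: "{v,x} \<in> E" and uniq: "\<forall>e\<in>E. v\<in>e \<longrightarrow> e = {v,x}"
    and p: "(u,y) \<in> (adj E)\<^sup>*" and u: "u \<noteq> v"
  shows "(if y = v then (u,x) else (u,y)) \<in> (adj (E - {{v,x}}))\<^sup>*"
  using p
proof (induction rule: rtrancl_induct)
  case base then show ?case using u by simp
next
  case (step y z)
  have yz: "{y,z} \<in> E" using step(2) by (simp add: adj_iff)
  have yzn: "y \<noteq> z" using sg_edge_neq[OF sg yz] .
  show ?case
  proof (cases "z = v")
    case True
    then have "{y,z} = {v,x}" using uniq yz by blast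
    then have yx: "y = x" using True yzn by (auto simp: doubleton_eq_iff)
    have "y \<noteq> v" using True yzn by simp
    then have "(u,y) \<in> (adj (E - {{v,x}}))\<^sup>*" using step(3) by simp
    then show ?thesis using yx True by simp
  next
    case False
    show ?thesis
    proof (cases "y = v")
      case True
      have "v \<in> {y,z}" using True by simp
      then have "{y,z} = {v,x}" using uniq yz by (meson bspec)
      then have "{v,z} = {v,x}" using True by simp
      then have zx: "z = x" by (metis doubleton_eq_iff)
      have "(u,x) \<in> (adj (E - {{v,x}}))\<^sup>*" using step(3) True by simp
      then show ?thesis using zx False by simp
    next
      case yv: False
      then have "{y,z} \<in> E - {{v,x}}" using yz False by (auto simp: doubleton_eq_iff)
      then have yz': "(y,z) \<in> adj (E - {{v,x}})" by (simp add: adj_iff)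
      moreover have "(u,y) \<in> (adj (E - {{v,x}}))\<^sup>*" using step(3) yv by simp
      ultimately show ?thesis using False by simp
    qed
  qed
qed

lemma A2:
  assumes T: "is_tree V E" and e0: "{v,x} \<in> E" and uniq: "\<forall>e\<in>E. v\<in>e \<longrightarrow> e = {v,x}"
    and wpos: "\<forall>e\<in>E. w e > 0"
  shows "Dmin V E w (V - {v}) = sum w E - w {v,x}"
proof -
  have sg: "simple_graph V E" using tree_sg[OF T] .
  have fin: "finite E" using sg_finite[OF sg] .
  have xv: "x \<noteq> v" using sg_edge_neq[OF sg e0] by simp
  have xV: "x \<in> V" "v \<in> V" using sg_edge_in[OF sg e0] by auto
  have "Dmin V E w (V - {v}) = sum w (E - {{v,x}})"
  proof (rule Dmin_eq[OF sg])
    show "connected_subgraph V E (V - {v}) (E - {{v,x}})"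
      unfolding connected_subgraph_def connected_graph_def
    proof (intro conjI)
      show "simple_graph (V - {v}) (E - {{v, x}})"
        using sg uniq unfolding simple_graph_def by blast
      show "V - {v} \<noteq> {}" using xV xv by blast
      show "\<forall>u\<in>V - {v}. \<forall>y\<in>V - {v}. (u, y) \<in> (adj (E - {{v, x}}))\<^sup>*"
      proof (intro ballI)
        fix u y assume "u \<in> V - {v}" "y \<in> V - {v}"
        then show "(u, y) \<in> (adj (E - {{v, x}}))\<^sup>*"
          using leaf_remove_conn[OF sg e0 uniq tree_conn[OF T, of u y]] by auto
      qed
    qed auto
    show "V - {v} \<subseteq> V - {v}" by simp
    fix VR ER assume S: "connected_subgraph V E VR ER" and VR: "V - {v} \<subseteq> VR"
    have "E - {{v,x}} \<subseteq> ER"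
    proof
      fix e assume "e \<in> E - {{v,x}}"
      then show "e \<in> ER" using sub_edge_in[OF T S VR] uniq by blast
    qed
    moreover have "ER \<subseteq> E" using S unfolding connected_subgraph_def by blast
    ultimately show "sum w (E - {{v,x}}) \<le> sum w ER"
      using fin wpos by (intro sum_mono2) (auto intro: finite_subset less_imp_le)
  qed
  also have "\<dots> = sum w E - w {v,x}" using fin e0 by (simp add: sum_diff1)
  finally show ?thesis .
qed

definition isleaf :: "'a set set \<Rightarrow> 'a \<Rightarrow> 'a \<Rightarrow> bool" where
  "isleaf E v x \<longleftrightarrow> {v,x} \<in> E \<and> (\<forall>e\<in>E. v \<in> e \<longrightarrow> e = {v,x})"

definition spath :: "'a set set \<Rightarrow> 'a list \<Rightarrow> bool" where
  "spath E p \<longleftrightarrow> distinct p \<and> (\<forall>i<length p - 1. {p!i, p!Suc i} \<in> E)"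

lemma isleaf_uniq:
  assumes "isleaf E v x" "{v,u} \<in> E" shows "u = x"
proof -
  have "\<forall>e\<in>E. v \<in> e \<longrightarrow> e = {v,x}" using assms(1) unfolding isleaf_def by simp
  then have "v \<in> {v,u} \<longrightarrow> {v,u} = {v,x}" using assms(2) by (rule bspec)
  then have "{v,u} = {v,x}" by simp
  then show ?thesis by (metis doubleton_eq_iff)
qed

lemma nbr_exists:
  assumes T: "is_tree V E" and v: "v \<in> V" and u: "u \<in> V" "u \<noteq> v"
  shows "\<exists>x. {v,x} \<in> E"
proof -
  have "(v,u) \<in> (adj E)\<^sup>*" using tree_conn[OF T v u(1)] .
  then show ?thesis using u(2)
    by (cases rule: converse_rtranclE) (auto simp: adj_iff)
qed

lemma leaf_or_two:
  assumes sg: "simple_graph V E" and x: "{v,x} \<in> E" and nl: "\<not> isleaf E v x"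
  shows "\<exists>y. {v,y} \<in> E \<and> y \<noteq> x"
proof -
  obtain e where e: "e \<in> E" "v \<in> e" "e \<noteq> {v,x}" using nl x unfolding isleaf_def by auto
  obtain y where y: "y \<noteq> v" "e = {v,y}" using sg_edge_form[OF sg e(1) e(2)] by metis
  then show ?thesis using e by auto
qed

lemma star_lemma:
  assumes T: "is_tree V E" and x: "x \<in> V" and nb: "\<forall>u. {x,u} \<in> E \<longrightarrow> (\<exists>z. isleaf E u z)"
    and y: "y \<in> V"
  shows "y = x \<or> {x,y} \<in> E"
proof -
  have sg: "simple_graph V E" using tree_sg[OF T] .
  have "(x,y) \<in> (adj E)\<^sup>*" using tree_conn[OF T x y] .
  then show ?thesis
  proof (induction rule: rtrancl_induct)
    case base then show ?case by simp
  next
    case (step y z)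
    have yz: "{y,z} \<in> E" using step(2) by (simp add: adj_iff)
    have yzn: "y \<noteq> z" using sg_edge_neq[OF sg yz] .
    show ?case
    proof (cases "y = x")
      case True then show ?thesis using yz by simp
    next
      case False
      then have xy: "{x,y} \<in> E" using step(3) by simp
      then obtain z0 where z0: "isleaf E y z0" using nb by metis
      have "{y,x} \<in> E" using xy by (simp add: insert_commute)
      then have "x = z0" using isleaf_uniq[OF z0] by simp
      moreover have "z = z0" using isleaf_uniq[OF z0 yz] .
      ultimately have "z = x" by simp
      then show ?thesis by simp
    qed
  qed
qed

lemma two_leaf_edge:
  assumes T: "is_tree V E" and c: "card V \<ge> 3" and a: "isleaf E a b" and b: "isleaf E b a"
  shows False
proof -
  have sg: "simple_graph V E" using tree_sg[OF T] .
  have ab: "{a,b} \<in> E" using a unfolding isleaf_def by simp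
  have aV: "a \<in> V" using sg_edge_in[OF sg ab] by simp
  have nb: "\<forall>u. {a,u} \<in> E \<longrightarrow> (\<exists>z. isleaf E u z)"
  proof (intro allI impI)
    fix u assume "{a,u} \<in> E"
    then have "u = b" using isleaf_uniq[OF a] by simp
    then show "\<exists>z. isleaf E u z" using b by blast
  qed
  have "V \<subseteq> {a,b}"
  proof
    fix y assume "y \<in> V"
    then have "y = a \<or> {a,y} \<in> E" using star_lemma[OF T aV nb] by simp
    moreover have "{a,y} \<in> E \<Longrightarrow> y = b"
    proof -
      assume "{a,y} \<in> E"
      then show "y = b" using isleaf_uniq[OF a] by simp
    qed
    ultimately show "y \<in> {a,b}" by auto
  qed
  then have "card V \<le> card {a,b}" by (intro card_mono) auto
  also have "\<dots> \<le> 2" by (simp add: card_insert_if)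
  finally have "card V \<le> 2" .
  then show False using c by simp
qed

lemma spath_seg:
  assumes p: "\<forall>i. j \<le> i \<longrightarrow> Suc i < length p \<longrightarrow> {p!i, p!Suc i} \<in> F"
    and jk: "j \<le> k" "k < length p"
  shows "(p!j, p!k) \<in> (adj F)\<^sup>*"
  using jk
proof (induction k)
  case 0 then show ?case by simp
next
  case (Suc k)
  show ?case
  proof (cases "j = Suc k")
    case True then show ?thesis by simp
  next
    case False
    then have "j \<le> k" using Suc(2) by simp
    then have 1: "(p!j, p!k) \<in> (adj F)\<^sup>*" using Suc by simp
    have "{p!k, p!Suc k} \<in> F" using p \<open>j \<le> k\<close> Suc(3) by simp
    then have "(p!k, p!Suc k) \<in> adj F" by (simp add: adj_iff)
    with 1 show ?thesis by simp
  qed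
qed

lemma end_leaf:
  assumes T: "is_tree V E" and sp: "spath E p" and pV: "set p \<subseteq> V" and l2: "length p \<ge> 2"
    and mx: "\<forall>q. spath E q \<and> set q \<subseteq> V \<longrightarrow> length q \<le> length p"
  shows "isleaf E (last p) (p ! (length p - 2))"
proof -
  have sg: "simple_graph V E" using tree_sg[OF T] .
  define m where "m = length p"
  have m2: "m \<ge> 2" using l2 m_def by simp
  have dist: "distinct p" using sp unfolding spath_def by simp
  have edges: "\<forall>i<m - 1. {p!i, p!Suc i} \<in> E" using sp unfolding spath_def m_def by simp
  define v where "v = p ! (m - 1)"
  define u0 where "u0 = p ! (m - 2)"
  have lastp: "last p = v" using m2 unfolding v_def m_def by (subst last_conv_nth) auto
  have "{u0, v} \<in> E"
  proof -
    have "m - 2 < m - 1" "Suc (m - 2) = m - 1" using m2 by auto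
    then show ?thesis using edges unfolding u0_def v_def by metis
  qed
  then have e0: "{v, u0} \<in> E" by (simp add: insert_commute)
  have uniq: "\<forall>e\<in>E. v \<in> e \<longrightarrow> e = {v,u0}"
  proof (intro ballI impI)
    fix e assume e: "e \<in> E" "v \<in> e"
    obtain u where u: "u \<noteq> v" "e = {v,u}" using sg_edge_form[OF sg e] by metis
    have eE: "{v,u} \<in> E" using e u by simp
    show "e = {v,u0}"
    proof (rule ccontr)
      assume ne: "e \<noteq> {v,u0}"
      then have uu0: "u \<noteq> u0" using u by auto
      show False
      proof (cases "u \<in> set p")
        case False
        define q where "q = p @ [u]"
        have "spath E q"
          unfolding spath_def
        proof (intro conjI allI impI)
          show "distinct q" using dist False unfolding q_def by simp
          fix i assume i: "i < length q - 1"
          show "{q ! i, q ! Suc i} \<in> E"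
          proof (cases "i < m - 1")
            case True
            then have "Suc i < m" by simp
            then show ?thesis using edges True unfolding q_def m_def by (simp add: nth_append)
          next
            case False
            then have "i = m - 1" using i unfolding q_def m_def by simp
            then have "q ! i = v" "q ! Suc i = u" using m2 unfolding q_def v_def m_def
              by (auto simp: nth_append)
            then show ?thesis using eE by simp
          qed
        qed
        moreover have "set q \<subseteq> V" using pV sg_edge_in[OF sg eE] unfolding q_def by simp
        ultimately have "length q \<le> length p" using mx by blast
        then show False unfolding q_def by simp
      next
        case True
        then obtain j where j: "j < m" "p ! j = u" unfolding m_def by (metis in_set_conv_nth)
        have "j \<noteq> m - 1" using j u(1) unfolding v_def by auto
        moreover have "j \<noteq> m - 2" using j uu0 unfolding u0_def by auto
        ultimately have jm: "j < m - 2" using j by simp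
        have "\<forall>i. j \<le> i \<longrightarrow> Suc i < length p \<longrightarrow> {p!i, p!Suc i} \<in> E - {{u,v}}"
        proof (intro allI impI)
          fix i assume i: "j \<le> i" "Suc i < length p"
          have "{p!i, p!Suc i} \<in> E" using edges i unfolding m_def by simp
          moreover have "{p!i, p!Suc i} \<noteq> {u,v}"
          proof
            assume "{p!i, p!Suc i} = {u,v}"
            then have "(p!i = p!j \<and> p!Suc i = p!(m-1)) \<or> (p!i = p!(m-1) \<and> p!Suc i = p!j)"
              using j unfolding v_def by (auto simp: doubleton_eq_iff)
            moreover have "p!i = p!j \<longleftrightarrow> i = j"
              using dist i j m2 unfolding m_def by (intro nth_eq_iff_index_eq) auto
            moreover have "p!Suc i = p!(m-1) \<longleftrightarrow> Suc i = m-1"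
              using dist i j m2 unfolding m_def by (intro nth_eq_iff_index_eq) auto
            moreover have "p!i = p!(m-1) \<longleftrightarrow> i = m-1"
              using dist i j m2 unfolding m_def by (intro nth_eq_iff_index_eq) auto
            ultimately have "(i = j \<and> Suc i = m - 1) \<or> i = m - 1" by argo
            then show False using jm i unfolding m_def by auto
          qed
          ultimately show "{p!i, p!Suc i} \<in> E - {{u,v}}" by simp
        qed
        then have "(p!j, p!(m-1)) \<in> (adj (E - {{u,v}}))\<^sup>*"
          using spath_seg[of j p "E - {{u,v}}" "m - 1"] jm m2 unfolding m_def by simp
        then have "(u,v) \<in> (adj (E - {{u,v}}))\<^sup>*" using j unfolding v_def by simp
        moreover have "{u,v} \<in> E" using eE by (simp add: insert_commute)
        ultimately show False by (rule K1[OF T, rotated])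
      qed
    qed
  qed
  have "u0 = p ! (length p - 2)" using u0_def m_def by simp
  moreover have "isleaf E v u0" unfolding isleaf_def using e0 uniq by blast
  ultimately show ?thesis using lastp by simp
qed

lemma spath_rev: assumes "spath E p" shows "spath E (rev p)"
  unfolding spath_def
proof (intro conjI allI impI)
  show "distinct (rev p)" using assms unfolding spath_def by simp
  fix i assume i: "i < length (rev p) - 1"
  define m where "m = length p"
  have i': "i < m - 1" using i m_def by simp
  have "m - 2 - i < m - 1" "Suc (m - 2 - i) = m - 1 - i" using i' by auto
  then have "{p ! (m - 2 - i), p ! (m - 1 - i)} \<in> E" using assms unfolding spath_def m_def by metis
  moreover have "rev p ! i = p ! (m - 1 - i)" using i' unfolding m_def by (simp add: rev_nth)
  moreover have "rev p ! Suc i = p ! (m - 2 - i)" using i' unfolding m_def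
    by (simp add: rev_nth numeral_2_eq_2)
  ultimately show "{rev p ! i, rev p ! Suc i} \<in> E" by (simp add: insert_commute)
qed

lemma two_leaves:
  assumes T: "is_tree V E" and c: "card V \<ge> 2"
  shows "\<exists>a b. a \<noteq> b \<and> a \<in> V \<and> b \<in> V \<and> (\<exists>z. isleaf E a z) \<and> (\<exists>z. isleaf E b z)"
proof -
  have sg: "simple_graph V E" using tree_sg[OF T] .
  have fin: "finite V" using sg unfolding simple_graph_def by simp
  define P where "P = {p. spath E p \<and> set p \<subseteq> V}"
  have bound: "\<And>p. p \<in> P \<Longrightarrow> length p \<le> card V"
  proof -
    fix p assume "p \<in> P"
    then have "distinct p" "set p \<subseteq> V" unfolding P_def spath_def by auto
    then show "length p \<le> card V" using fin by (metis card_mono distinct_card)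
  qed
  have finL: "finite (length ` P)"
    by (rule finite_subset[of _ "{..card V}"]) (auto dest: bound)
  obtain v u where vu: "v \<in> V" "u \<in> V" "u \<noteq> v"
    using c by (metis card_2_iff' card_le_Suc0_iff_eq fin not_less_eq_eq numeral_2_eq_2)
  obtain x where x: "{v,x} \<in> E" using nbr_exists[OF T vu] by metis
  have "[v,x] \<in> P" unfolding P_def spath_def using x sg_edge_neq[OF sg x] sg_edge_in[OF sg x] by auto
  then have ne: "length ` P \<noteq> {}" by blast
  define m where "m = Max (length ` P)"
  have "m \<in> length ` P" unfolding m_def using finL ne by (rule Max_in)
  then obtain p where p: "p \<in> P" "length p = m" by blast
  have mx: "\<forall>q. spath E q \<and> set q \<subseteq> V \<longrightarrow> length q \<le> length p"
    using finL p(2) unfolding m_def P_def by auto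
  have "length [v,x] \<le> length p" using mx \<open>[v,x] \<in> P\<close> unfolding P_def by blast
  then have l2: "length p \<ge> 2" by simp
  have sp: "spath E p" "set p \<subseteq> V" using p unfolding P_def by auto
  have L1: "isleaf E (last p) (p ! (length p - 2))" using end_leaf[OF T sp l2 mx] .
  have sp': "spath E (rev p)" using spath_rev[OF sp(1)] .
  have L2: "isleaf E (last (rev p)) (rev p ! (length (rev p) - 2))"
    using end_leaf[OF T sp' _ _] sp(2) l2 mx by simp
  have "hd p \<noteq> last p"
  proof -
    have "distinct p" using sp unfolding spath_def by simp
    moreover have "p \<noteq> []" using l2 by auto
    then have "hd p = p ! 0" "last p = p ! (length p - 1)"
      by (simp_all add: hd_conv_nth last_conv_nth)
    moreover have "p ! 0 \<noteq> p ! (length p - 1)"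
      using \<open>distinct p\<close> l2 by (subst nth_eq_iff_index_eq) auto
    ultimately show ?thesis by simp
  qed
  moreover have "p \<noteq> []" using l2 by auto
  then have "hd p \<in> V" "last p \<in> V" using sp(2) by auto
  ultimately show ?thesis using L1 L2 by (metis last_rev)
qed

lemma fwd_alg:
  fixes D a :: "nat \<Rightarrow> real" and V Lf I :: "nat set"
  assumes fin: "finite V" and cV: "card V = n" and n3: "n \<ge> 3" and LV: "Lf \<subseteq> V"
    and Idef: "I = V - Lf" and Ine: "I \<noteq> {}" and cL: "card Lf \<ge> 2"
    and DI: "\<forall>i\<in>I. D i = W" and DL: "\<forall>l\<in>Lf. D l = W - a l \<and> a l > 0"
    and sL: "sL = (\<Sum>l\<in>Lf. a l)" and sLW: "sL \<le> W"
    and eq1: "sL = W \<longrightarrow> card I \<le> 1" and lt2: "sL < W \<longrightarrow> card I \<ge> 2"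
  shows "(\<forall>i\<in>V. (real n - 2) * D i \<le> (\<Sum>j\<in>V - {i}. D j))
      \<and> card {i\<in>V. (real n - 2) * D i = (\<Sum>j\<in>V - {i}. D j)} \<le> 1
      \<and> ((\<exists>i\<in>V. (real n - 2) * D i = (\<Sum>j\<in>V - {i}. D j))
          \<or> card {i\<in>V. D i = Max (D ` V)} \<ge> 2)
      \<and> card {i\<in>V. D i = Max (D ` V)} \<le> n - 2"
proof -
  have finL: "finite Lf" using fin LV finite_subset by blast
  have finI: "finite I" using fin Idef by simp
  have VIL: "V = I \<union> Lf" "I \<inter> Lf = {}" using Idef LV by auto
  have cIL: "card I + card Lf = n" using VIL finI finL cV by (metis card_Un_disjoint)
  have sumI: "(\<Sum>i\<in>I. D i) = real (card I) * W" using DI by simp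
  have sumL: "(\<Sum>l\<in>Lf. D l) = real (card Lf) * W - sL"
  proof -
    have "(\<Sum>l\<in>Lf. D l) = (\<Sum>l\<in>Lf. W - a l)" using DL by (intro sum.cong) auto
    also have "\<dots> = real (card Lf) * W - sL" using sL by (simp add: sum_subtractf)
    finally show ?thesis .
  qed
  define ST where "ST = real n * W - sL"
  have sumV: "(\<Sum>j\<in>V. D j) = ST"
  proof -
    have "(\<Sum>j\<in>V. D j) = (\<Sum>i\<in>I. D i) + (\<Sum>l\<in>Lf. D l)"
      using VIL finI finL by (simp add: sum.union_disjoint)
    also have "\<dots> = (real (card I) + real (card Lf)) * W - sL" using sumI sumL by (simp add: algebra_simps)
    also have "real (card I) + real (card Lf) = real n" using cIL by (metis of_nat_add)
    finally show ?thesis unfolding ST_def .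
  qed
  have sumdiff: "\<And>i. i \<in> V \<Longrightarrow> (\<Sum>j\<in>V - {i}. D j) = ST - D i"
    using fin sumV by (simp add: sum_diff1)
  have rn: "real n \<ge> 3" using n3 by simp
  have eqI: "\<And>i. i \<in> I \<Longrightarrow> ((real n - 2) * D i \<le> ST - D i) \<and> ((real n - 2) * D i = ST - D i \<longleftrightarrow> sL = W)"
  proof -
    fix i assume "i \<in> I"
    then have "D i = W" using DI by simp
    then show "((real n - 2) * D i \<le> ST - D i) \<and> ((real n - 2) * D i = ST - D i \<longleftrightarrow> sL = W)"
      unfolding ST_def using sLW by (auto simp: algebra_simps)
  qed
  have ltL: "\<And>l. l \<in> Lf \<Longrightarrow> (real n - 2) * D l < ST - D l"
  proof -
    fix l assume "l \<in> Lf"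
    then have "D l = W - a l" "a l > 0" using DL by auto
    moreover have "(real n - 1) * a l > 0" using \<open>a l > 0\<close> rn by simp
    moreover have "ST - D l - (real n - 2) * D l = (W - sL) + (real n - 1) * a l"
      unfolding ST_def \<open>D l = W - a l\<close> by (simp add: algebra_simps)
    ultimately show "(real n - 2) * D l < ST - D l"
      using sLW by linarith
  qed
  have c1: "\<forall>i\<in>V. (real n - 2) * D i \<le> (\<Sum>j\<in>V - {i}. D j)"
  proof
    fix i assume iV: "i \<in> V"
    show "(real n - 2) * D i \<le> (\<Sum>j\<in>V - {i}. D j)"
    proof (cases "i \<in> I")
      case True then show ?thesis using eqI sumdiff iV by simp
    next
      case False then have "i \<in> Lf" using iV VIL by auto
      then show ?thesis using ltL sumdiff iV by (simp add: less_imp_le)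
    qed
  qed
  have eqset: "{i\<in>V. (real n - 2) * D i = (\<Sum>j\<in>V - {i}. D j)} = (if sL = W then I else {})"
  proof -
    have "\<And>i. i \<in> V \<Longrightarrow> ((real n - 2) * D i = (\<Sum>j\<in>V - {i}. D j)) \<longleftrightarrow> (i \<in> I \<and> sL = W)"
    proof -
      fix i assume iV: "i \<in> V"
      show "((real n - 2) * D i = (\<Sum>j\<in>V - {i}. D j)) \<longleftrightarrow> (i \<in> I \<and> sL = W)"
      proof (cases "i \<in> I")
        case True then show ?thesis using eqI sumdiff iV by simp
      next
        case False then have "i \<in> Lf" using iV VIL by auto
        then show ?thesis using ltL[of i] sumdiff iV False by auto
      qed
    qed
    then show ?thesis using VIL by auto
  qed
  have maxW: "Max (D ` V) = W"
  proof (rule Max_eqI)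
    show "finite (D ` V)" using fin by simp
    show "\<And>y. y \<in> D ` V \<Longrightarrow> y \<le> W"
    proof -
      fix y assume "y \<in> D ` V"
      then obtain i where i: "i \<in> V" "y = D i" by blast
      show "y \<le> W"
      proof (cases "i \<in> I")
        case True then show ?thesis using DI i by simp
      next
        case False then have "i \<in> Lf" using i VIL by auto
        then show ?thesis using DL i by force
      qed
    qed
    obtain i where "i \<in> I" using Ine by blast
    moreover have "i \<in> V" using \<open>i \<in> I\<close> VIL by auto
    ultimately show "W \<in> D ` V" using DI by (metis image_eqI)
  qed
  have maxset: "{i\<in>V. D i = Max (D ` V)} = I"
  proof -
    have L: "\<And>i. i \<in> Lf \<Longrightarrow> D i \<noteq> W"
    proof -
      fix i assume "i \<in> Lf"
      then have "D i = W - a i" "a i > 0" using DL by auto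
      then show "D i \<noteq> W" by simp
    qed
    show ?thesis unfolding maxW
    proof (rule set_eqI)
      fix i show "i \<in> {i \<in> V. D i = W} \<longleftrightarrow> i \<in> I"
      proof (cases "i \<in> I")
        case True then show ?thesis using DI VIL by auto
      next
        case False then show ?thesis using L VIL by auto
      qed
    qed
  qed
  show ?thesis
  proof (intro conjI)
    show "\<forall>i\<in>V. (real n - 2) * D i \<le> (\<Sum>j\<in>V - {i}. D j)" by (rule c1)
    show "card {i\<in>V. (real n - 2) * D i = (\<Sum>j\<in>V - {i}. D j)} \<le> 1"
      unfolding eqset using eq1 by simp
    show "(\<exists>i\<in>V. (real n - 2) * D i = (\<Sum>j\<in>V - {i}. D j)) \<or> 2 \<le> card {i\<in>V. D i = Max (D ` V)}"
    proof (cases "sL = W")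
      case True
      obtain i where "i \<in> I" using Ine by blast
      then have "i \<in> {i\<in>V. (real n - 2) * D i = (\<Sum>j\<in>V - {i}. D j)}" using eqset True by simp
      then show ?thesis by blast
    next
      case False
      then have "card I \<ge> 2" using lt2 sLW by simp
      then show ?thesis unfolding maxset by simp
    qed
    show "card {i\<in>V. D i = Max (D ` V)} \<le> n - 2" unfolding maxset using cIL cL by simp
  qed
qed

lemma isleaf_edge: "isleaf E v x \<Longrightarrow> {v,x} \<in> E"
  unfolding isleaf_def by (rule conjunct1)

lemma isleaf_all: "isleaf E v x \<Longrightarrow> e \<in> E \<Longrightarrow> v \<in> e \<Longrightarrow> e = {v,x}"
  unfolding isleaf_def by blast

lemma isleaf_all': "isleaf E v x \<Longrightarrow> \<forall>e\<in>E. v \<in> e \<longrightarrow> e = {v,x}"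
  unfolding isleaf_def by (rule conjunct2)

lemma fwd_graph:
  fixes V :: "nat set" and D :: "nat \<Rightarrow> real"
  assumes T: "is_tree V E" and cV: "card V = n" and n3: "n \<ge> 3"
    and wpos: "\<forall>e\<in>E. w e > 0"
    and DD: "\<forall>i\<in>V. Dmin V E w (V - {i}) = D i"
  shows "(\<forall>i\<in>V. (real n - 2) * D i \<le> (\<Sum>j\<in>V - {i}. D j))
      \<and> card {i\<in>V. (real n - 2) * D i = (\<Sum>j\<in>V - {i}. D j)} \<le> 1
      \<and> ((\<exists>i\<in>V. (real n - 2) * D i = (\<Sum>j\<in>V - {i}. D j))
          \<or> card {i\<in>V. D i = Max (D ` V)} \<ge> 2)
      \<and> card {i\<in>V. D i = Max (D ` V)} \<le> n - 2"
proof -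
  have sg: "simple_graph V E" using tree_sg[OF T] .
  have fin: "finite V" using sg unfolding simple_graph_def by simp
  have finE: "finite E" using sg_finite[OF sg] .
  define nb where "nb v = (SOME z. isleaf E v z)" for v
  define Lf where "Lf = {v\<in>V. \<exists>z. isleaf E v z}"
  define I where "I = V - Lf"
  define le where "le v = {v, nb v}" for v
  define a where "a l = w (le l)" for l
  define W where "W = sum w E"
  define sL where "sL = (\<Sum>l\<in>Lf. a l)"
  have LV: "Lf \<subseteq> V" unfolding Lf_def by auto
  have finL: "finite Lf" using fin LV finite_subset by blast
  have leafnb: "\<And>l. l \<in> Lf \<Longrightarrow> isleaf E l (nb l)"
    unfolding Lf_def nb_def by (auto intro: someI)
  have leE: "\<And>l. l \<in> Lf \<Longrightarrow> le l \<in> E" unfolding le_def using leafnb isleaf_edge by metis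
  have cV2: "card V \<ge> 2" using cV n3 by simp
  have other: "\<And>v. v \<in> V \<Longrightarrow> \<exists>u\<in>V. u \<noteq> v"
  proof -
    fix v assume "v \<in> V"
    show "\<exists>u\<in>V. u \<noteq> v"
    proof (rule ccontr)
      assume "\<not> ?thesis"
      then have "V \<subseteq> {v}" by auto
      then have "card V \<le> 1" using card_mono[of "{v}" V] by simp
      then show False using cV2 by simp
    qed
  qed
  have DI: "\<forall>i\<in>I. D i = W"
  proof
    fix i assume i: "i \<in> I"
    then have iV: "i \<in> V" and nl: "\<not> (\<exists>z. isleaf E i z)" unfolding I_def Lf_def by auto
    obtain u where u: "u \<in> V" "u \<noteq> i" using other[OF iV] by blast
    obtain x where x: "{i,x} \<in> E" using nbr_exists[OF T iV u] by metis
    obtain y where y: "{i,y} \<in> E" "y \<noteq> x" using leaf_or_two[OF sg x] nl by metis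
    have "Dmin V E w (V - {i}) = W" unfolding W_def using A1[OF T iV x y(1)] y(2) by simp
    then show "D i = W" using DD iV by simp
  qed
  have DL: "\<forall>l\<in>Lf. D l = W - a l \<and> a l > 0"
  proof
    fix l assume l: "l \<in> Lf"
    have lf: "isleaf E l (nb l)" using leafnb[OF l] .
    have "Dmin V E w (V - {l}) = W - a l"
      unfolding W_def a_def le_def using A2[OF T isleaf_edge[OF lf] isleaf_all'[OF lf] wpos] .
    moreover have "a l > 0" using wpos leE[OF l] unfolding a_def by simp
    ultimately show "D l = W - a l \<and> a l > 0" using DD l LV by auto
  qed
  have inj: "inj_on le Lf"
  proof (rule inj_onI)
    fix l l' assume l: "l \<in> Lf" and l': "l' \<in> Lf" and eq: "le l = le l'"
    show "l = l'"
    proof (rule ccontr)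
      assume ne: "l \<noteq> l'"
      from eq have "{l, nb l} = {l', nb l'}" unfolding le_def .
      then have "nb l = l'" "nb l' = l" using ne by (auto simp: doubleton_eq_iff)
      then have "isleaf E l l'" "isleaf E l' l" using leafnb[OF l] leafnb[OF l'] by simp_all
      then show False using two_leaf_edge[OF T] cV n3 by auto
    qed
  qed
  have sLsum: "sL = sum w (le ` Lf)"
    unfolding sL_def a_def using sum.reindex[OF inj, of w] by simp
  have leLE: "le ` Lf \<subseteq> E" using leE by auto
  have sLW: "sL \<le> W" unfolding sLsum W_def
    using wpos leLE finE by (intro sum_mono2) (auto intro: less_imp_le)
  have sLeq: "sL = W \<Longrightarrow> le ` Lf = E"
  proof (rule ccontr)
    assume eq: "sL = W" and ne: "le ` Lf \<noteq> E"
    then obtain e where e: "e \<in> E" "e \<notin> le ` Lf" using leLE by auto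
    have "sum w E = sum w (le ` Lf) + sum w (E - le ` Lf)"
      using finE leLE by (metis sum.subset_diff add.commute)
    moreover have "sum w (E - le ` Lf) \<ge> w e"
      using finE e wpos by (intro member_le_sum) (auto intro: less_imp_le)
    moreover have "w e > 0" using wpos e by simp
    ultimately have "sL < W" unfolding sLsum W_def by simp
    then show False using eq by simp
  qed
  have Ine: "I \<noteq> {}"
  proof -
    obtain v where v: "v \<in> V" using cV2 by (metis card.empty ex_in_conv not_numeral_le_zero)
    show ?thesis
    proof (cases "v \<in> Lf")
      case False then show ?thesis unfolding I_def using v by auto
    next
      case True
      define x where "x = nb v"
      have lv: "isleaf E v x" using leafnb[OF True] unfolding x_def .
      have xE: "{v,x} \<in> E" using isleaf_edge[OF lv] .
      have xV: "x \<in> V" using sg_edge_in[OF sg xE] by simp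
      have "x \<notin> Lf"
      proof
        assume "x \<in> Lf"
        then obtain z where z: "isleaf E x z" unfolding Lf_def by auto
        have "{x,v} \<in> E" using xE by (simp add: insert_commute)
        then have "v = z" using isleaf_uniq[OF z] by simp
        then have "isleaf E x v" using z by simp
        then show False using two_leaf_edge[OF T _ lv] cV n3 by simp
      qed
      then show ?thesis unfolding I_def using xV by auto
    qed
  qed
  have cL: "card Lf \<ge> 2"
  proof -
    obtain p q where pq: "p \<noteq> q" "p \<in> V" "q \<in> V" "\<exists>z. isleaf E p z" "\<exists>z. isleaf E q z"
      using two_leaves[OF T cV2] by metis
    then have "{p,q} \<subseteq> Lf" unfolding Lf_def by auto
    then have "card {p,q} \<le> card Lf" using finL by (rule card_mono[rotated])
    then show ?thesis using pq(1) by simp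
  qed
  have eq1: "sL = W \<longrightarrow> card I \<le> 1"
  proof
    assume "sL = W"
    then have allE: "le ` Lf = E" using sLeq by simp
    obtain x where x: "x \<in> I" using Ine by blast
    then have xV: "x \<in> V" and xL: "x \<notin> Lf" unfolding I_def by auto
    have nbL: "\<forall>u. {x,u} \<in> E \<longrightarrow> (\<exists>z. isleaf E u z)"
    proof (intro allI impI)
      fix u assume "{x,u} \<in> E"
      then obtain l where l: "l \<in> Lf" "{x,u} = {l, nb l}" using allE unfolding le_def by blast
      then have "l = x \<or> l = u" by (auto simp: doubleton_eq_iff)
      then have "l = u" using xL l(1) by auto
      then show "\<exists>z. isleaf E u z" using leafnb[OF l(1)] by auto
    qed
    have "I \<subseteq> {x}"
    proof
      fix y assume y: "y \<in> I"
      then have yV: "y \<in> V" unfolding I_def by simp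
      have "y = x \<or> {x,y} \<in> E" using star_lemma[OF T xV nbL yV] .
      moreover have "{x,y} \<in> E \<Longrightarrow> y \<in> Lf" using nbL yV unfolding Lf_def by auto
      ultimately show "y \<in> {x}" using y unfolding I_def by auto
    qed
    then show "card I \<le> 1" using card_mono[of "{x}" I] by simp
  qed
  have lt2: "sL < W \<longrightarrow> card I \<ge> 2"
  proof
    assume "sL < W"
    then have ne: "le ` Lf \<noteq> E"
    proof -
      assume "sL < W"
      show "le ` Lf \<noteq> E"
      proof
        assume "le ` Lf = E"
        then have "sL = W" unfolding sLsum W_def by simp
        then show False using \<open>sL < W\<close> by simp
      qed
    qed
    then obtain e where e: "e \<in> E" "e \<notin> le ` Lf" using leLE by auto
    have "card e = 2" using sg e(1) unfolding simple_graph_def by blast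
    then obtain p q where pq: "e = {p,q}" "p \<noteq> q" by (meson card_2_iff)
    have notL: "\<And>r. r \<in> e \<Longrightarrow> r \<notin> Lf"
    proof
      fix r assume r: "r \<in> e" "r \<in> Lf"
      have "isleaf E r (nb r)" using leafnb[OF r(2)] .
      then have "e = le r" using isleaf_all e(1) r(1) unfolding le_def by metis
      then show False using e(2) r(2) by auto
    qed
    have "p \<in> V" "q \<in> V" using sg_edge_in[OF sg] e(1) pq(1) by auto
    then have "{p,q} \<subseteq> I" using notL pq(1) unfolding I_def by auto
    moreover have "finite I" unfolding I_def using fin by simp
    ultimately have "card {p,q} \<le> card I" by (rule card_mono[rotated])
    then show "card I \<ge> 2" using pq(2) by simp
  qed
  show ?thesis
    using fwd_alg[OF fin cV n3 LV I_def Ine cL DI DL sL_def sLW eq1 lt2] .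
qed

lemma tree_single: "is_tree {r} {}"
  unfolding is_tree_def connected_graph_def simple_graph_def is_cycle_def by auto

lemma add_leaf:
  assumes T: "is_tree V E" and v: "v \<notin> V" and u: "u \<in> V"
  shows "is_tree (insert v V) (insert {v,u} E)"
proof -
  have sg: "simple_graph V E" using tree_sg[OF T] .
  have uv: "u \<noteq> v" using u v by auto
  let ?V = "insert v V" and ?E = "insert {v,u} E"
  have sg': "simple_graph ?V ?E"
    using sg uv u unfolding simple_graph_def by auto
  have EV: "\<And>e. e \<in> E \<Longrightarrow> e \<subseteq> V" using sg unfolding simple_graph_def by blast
  have nbv: "\<And>a. {a,v} \<in> ?E \<Longrightarrow> a = u"
  proof -
    fix a assume a: "{a,v} \<in> ?E"
    show "a = u"
    proof (cases "{a,v} = {v,u}")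
      case True then show ?thesis by (auto simp: doubleton_eq_iff)
    next
      case False then have "{a,v} \<in> E" using a by simp
      then have "v \<in> V" using EV by blast
      then show ?thesis using v by simp
    qed
  qed
  have toU: "\<And>a. a \<in> ?V \<Longrightarrow> (a,u) \<in> (adj ?E)\<^sup>*"
  proof -
    fix a assume a: "a \<in> ?V"
    show "(a,u) \<in> (adj ?E)\<^sup>*"
    proof (cases "a = v")
      case True
      then have "(a,u) \<in> adj ?E" by (simp add: adj_iff)
      then show ?thesis by simp
    next
      case False
      then have "(a,u) \<in> (adj E)\<^sup>*" using a tree_conn[OF T _ u] by simp
      then show ?thesis using adj_rtrancl_mono[of E ?E] by blast
    qed
  qed
  have sym: "\<And>a b. (a,b) \<in> (adj ?E)\<^sup>* \<Longrightarrow> (b,a) \<in> (adj ?E)\<^sup>*"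
  proof -
    have "sym (adj ?E)" unfolding sym_def adj_def by (auto simp: insert_commute)
    then show "\<And>a b. (a,b) \<in> (adj ?E)\<^sup>* \<Longrightarrow> (b,a) \<in> (adj ?E)\<^sup>*"
      by (meson sym_rtrancl symD)
  qed
  have conn: "\<forall>a\<in>?V. \<forall>b\<in>?V. (a,b) \<in> (adj ?E)\<^sup>*"
    using toU sym by (meson rtrancl_trans)
  have nocyc: "\<not> (\<exists>cs. is_cycle ?E cs)"
  proof
    assume "\<exists>cs. is_cycle ?E cs"
    then obtain cs where cs: "is_cycle ?E cs" by blast
    define L where "L = length cs"
    have L3: "L \<ge> 3" and dist: "distinct cs" and ed: "\<forall>i<L - 1. {cs!i, cs!Suc i} \<in> ?E"
      and cl: "{last cs, hd cs} \<in> ?E" using cs unfolding is_cycle_def L_def by auto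
    have ne: "cs \<noteq> []" using L3 L_def by auto
    have hd: "hd cs = cs ! 0" using ne by (simp add: hd_conv_nth)
    have lst: "last cs = cs ! (L - 1)" using ne L_def by (simp add: last_conv_nth)
    show False
    proof (cases "v \<in> set cs")
      case False
      have "is_cycle E cs" unfolding is_cycle_def
      proof (intro conjI allI impI)
        show "3 \<le> length cs" "distinct cs" using L3 dist L_def by auto
        fix i assume i: "i < length cs - 1"
        have "i < length cs" using i by simp
        then have "cs ! i \<in> set cs" by (rule nth_mem)
        then have "cs ! i \<noteq> v" using False by auto
        have "Suc i < length cs" using i by simp
        then have "cs ! Suc i \<in> set cs" by (rule nth_mem)
        then have "cs ! Suc i \<noteq> v" using False by auto
        then have "{cs!i, cs!Suc i} \<noteq> {v,u}" using \<open>cs ! i \<noteq> v\<close> by (auto simp: doubleton_eq_iff)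
        then show "{cs!i, cs!Suc i} \<in> E" using ed i L_def by auto
      next
        have "last cs \<noteq> v" "hd cs \<noteq> v" using False ne by auto
        then have "{last cs, hd cs} \<noteq> {v,u}" by (auto simp: doubleton_eq_iff)
        then show "{last cs, hd cs} \<in> E" using cl by auto
      qed
      then show False using tree_no_cycle[OF T] by blast
    next
      case True
      then obtain j where j: "j < L" "cs ! j = v" unfolding L_def by (metis in_set_conv_nth)
      define pj where "pj = (if j > 0 then j - 1 else L - 1)"
      define sj where "sj = (if j < L - 1 then j + 1 else 0)"
      have "{cs ! pj, cs ! j} \<in> ?E"
      proof (cases "j > 0")
        case True
        then have "j - 1 < L - 1" "Suc (j - 1) = j" using j by auto
        then show ?thesis using ed unfolding pj_def using True by metis
      next
        case False
        then show ?thesis using cl hd lst unfolding pj_def by simp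
      qed
      then have "{cs ! pj, v} \<in> ?E" using j by simp
      then have p: "cs ! pj = u" using nbv by blast
      have "{cs ! j, cs ! sj} \<in> ?E"
      proof (cases "j < L - 1")
        case True
        then show ?thesis using ed unfolding sj_def by simp
      next
        case False
        then have "j = L - 1" using j by simp
        then show ?thesis using cl hd lst unfolding sj_def by simp
      qed
      then have "{cs ! sj, v} \<in> ?E" using j by (simp add: insert_commute)
      then have s: "cs ! sj = u" using nbv by blast
      have "pj < L" "sj < L" using j L3 unfolding pj_def sj_def by auto
      moreover have "pj \<noteq> sj" using j L3 unfolding pj_def sj_def by auto
      ultimately have "cs ! pj \<noteq> cs ! sj" using dist L_def by (simp add: nth_eq_iff_index_eq)
      then show False using p s by simp
    qed
  qed
  show ?thesis unfolding is_tree_def connected_graph_def using sg' conn nocyc by auto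
qed

lemma tree_build:
  assumes dist: "distinct vs" and N: "length vs = N" "N \<ge> 1"
    and q: "\<forall>j. 0 < j \<and> j < N \<longrightarrow> q j < j"
  shows "is_tree (set vs) {{vs!j, vs!(q j)} | j. 0 < j \<and> j < N}"
proof -
  have P: "k \<le> N \<Longrightarrow> 1 \<le> k \<Longrightarrow> is_tree (set (take k vs)) {{vs!j, vs!(q j)} | j. 0 < j \<and> j < k}" for k
  proof (induction k)
    case 0 then show ?case by simp
  next
    case (Suc k)
    show ?case
    proof (cases "k = 0")
      case True
      have "set (take 1 vs) = {vs!0}" using N by (cases vs) auto
      moreover have "{{vs!j, vs!(q j)} | j. 0 < j \<and> j < 1} = {}" by auto
      ultimately show ?thesis using True tree_single by simp
    next
      case False
      then have IH: "is_tree (set (take k vs)) {{vs!j, vs!(q j)} | j. 0 < j \<and> j < k}"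
        using Suc by simp
      have kN: "k < N" using Suc by simp
      have st: "set (take (Suc k) vs) = insert (vs!k) (set (take k vs))"
        using kN N by (simp add: take_Suc_conv_app_nth)
      have "distinct (take k vs @ [vs!k])" using dist kN N by (metis distinct_take take_Suc_conv_app_nth)
      then have notin: "vs!k \<notin> set (take k vs)" by simp
      have qk: "q k < k" using q kN False by simp
      have "q k < length (take k vs)" using qk kN N by simp
      then have "take k vs ! (q k) \<in> set (take k vs)" by (rule nth_mem)
      then have qin: "vs!(q k) \<in> set (take k vs)" using qk by simp
      have ed: "{{vs!j, vs!(q j)} | j. 0 < j \<and> j < Suc k} = insert {vs!k, vs!(q k)} {{vs!j, vs!(q j)} | j. 0 < j \<and> j < k}"
        using False by (auto simp: less_Suc_eq)
      show ?thesis unfolding st ed using add_leaf[OF IH notin qin] .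
    qed
  qed
  show ?thesis using P[of N] N by simp
qed

lemma bwd_alg:
  fixes D :: "nat \<Rightarrow> real" and V :: "nat set"
  assumes fin: "finite V" and cV: "card V = n" and n3: "n \<ge> 3"
    and H1: "\<forall>i\<in>V. (real n - 2) * D i \<le> (\<Sum>j\<in>V - {i}. D j)"
    and H2: "card {i\<in>V. (real n - 2) * D i = (\<Sum>j\<in>V - {i}. D j)} \<le> 1"
    and H3: "(\<exists>i\<in>V. (real n - 2) * D i = (\<Sum>j\<in>V - {i}. D j)) \<or> card {i\<in>V. D i = Max (D ` V)} \<ge> 2"
    and Mdef: "M = Max (D ` V)" and Kdef: "K = {i\<in>V. D i = M}" and Ldef: "L = V - K"
    and sLdef: "sL = (\<Sum>l\<in>L. M - D l)"
  shows "K \<noteq> {}" "\<forall>l\<in>L. D l < M" "sL \<le> M" "card K = 1 \<Longrightarrow> sL = M" "card K \<ge> 2 \<Longrightarrow> sL < M"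
proof -
  have Vne: "V \<noteq> {}" using cV n3 by auto
  have Mle: "\<And>i. i \<in> V \<Longrightarrow> D i \<le> M" unfolding Mdef using fin by simp
  have "M \<in> D ` V" unfolding Mdef using fin Vne by simp
  then obtain k where k: "k \<in> V" "D k = M" by auto
  then show Kne: "K \<noteq> {}" unfolding Kdef by auto
  show DL: "\<forall>l\<in>L. D l < M" unfolding Ldef Kdef using Mle by (auto simp: order.strict_iff_order)
  have finK: "finite K" "finite L" unfolding Kdef Ldef using fin by auto
  have VKL: "V = K \<union> L" "K \<inter> L = {}" unfolding Ldef Kdef by auto
  have cKL: "card K + card L = n" using cV VKL finK by (metis card_Un_disjoint)
  define S where "S = (\<Sum>j\<in>V. D j)"
  have S: "S = real n * M - sL"
  proof -
    have "S = (\<Sum>j\<in>K. D j) + (\<Sum>j\<in>L. D j)" unfolding S_def using VKL finK by (simp add: sum.union_disjoint)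
    also have "(\<Sum>j\<in>K. D j) = real (card K) * M" unfolding Kdef by simp
    also have "(\<Sum>j\<in>L. D j) = real (card L) * M - sL" unfolding sLdef by (simp add: sum_subtractf)
    finally have "S = (real (card K) + real (card L)) * M - sL" by (simp add: algebra_simps)
    moreover have "real (card K) + real (card L) = real n" using cKL by (metis of_nat_add)
    ultimately show ?thesis by simp
  qed
  have sd: "\<And>i. i \<in> V \<Longrightarrow> (\<Sum>j\<in>V - {i}. D j) = S - D i" unfolding S_def using fin by (simp add: sum_diff1)
  have eqK: "\<And>i. i \<in> V \<Longrightarrow> (real n - 2) * D i = (\<Sum>j\<in>V - {i}. D j) \<Longrightarrow> i \<in> K"
  proof -
    fix i assume i: "i \<in> V" and e: "(real n - 2) * D i = (\<Sum>j\<in>V - {i}. D j)"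
    have "(real n - 2) * M \<le> S - M" using H1 k sd by force
    moreover have "(real n - 2) * D i = S - D i" using e sd i by simp
    ultimately have "(real n - 1) * M \<le> (real n - 1) * D i" by (simp add: algebra_simps)
    moreover have "real n - 1 > 0" using n3 by simp
    ultimately have "M \<le> D i" by simp
    then show "i \<in> K" using Mle i unfolding Kdef by force
  qed
  have kK: "k \<in> K" using k unfolding Kdef by simp
  have "(real n - 2) * M \<le> S - M" using H1 k sd by force
  then show sLM: "sL \<le> M" using S by (simp add: algebra_simps)
  have eqiff: "\<And>i. i \<in> K \<Longrightarrow> ((real n - 2) * D i = (\<Sum>j\<in>V - {i}. D j)) \<longleftrightarrow> sL = M"
  proof -
    fix i assume i: "i \<in> K"
    then have iV: "i \<in> V" and Di: "D i = M" unfolding Kdef by auto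
    have "(\<Sum>j\<in>V - {i}. D j) = real n * M - sL - M" using sd[OF iV] S Di by simp
    then show "((real n - 2) * D i = (\<Sum>j\<in>V - {i}. D j)) \<longleftrightarrow> sL = M" unfolding Di
      by (auto simp: algebra_simps)
  qed
  show "card K = 1 \<Longrightarrow> sL = M"
  proof -
    assume c1: "card K = 1"
    have "\<not> card {i\<in>V. D i = Max (D ` V)} \<ge> 2" using c1 unfolding Kdef Mdef by simp
    then obtain i where i: "i \<in> V" "(real n - 2) * D i = (\<Sum>j\<in>V - {i}. D j)" using H3 by blast
    then have "i \<in> K" using eqK by simp
    then show "sL = M" using eqiff i by simp
  qed
  show "card K \<ge> 2 \<Longrightarrow> sL < M"
  proof -
    assume c2: "card K \<ge> 2"
    show "sL < M"
    proof (rule ccontr)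
      assume "\<not> sL < M"
      then have "sL = M" using sLM by simp
      then have "K \<subseteq> {i\<in>V. (real n - 2) * D i = (\<Sum>j\<in>V - {i}. D j)}"
        using eqiff unfolding Kdef by auto
      then have "card K \<le> card {i\<in>V. (real n - 2) * D i = (\<Sum>j\<in>V - {i}. D j)}"
        using fin by (intro card_mono) auto
      then show False using H2 c2 by simp
    qed
  qed
qed

lemma construct:
  fixes D :: "nat \<Rightarrow> real" and V K L :: "nat set"
  assumes fin: "finite V" and cV: "card V = n" and n3: "n \<ge> 3" and KV: "K \<subseteq> V"
    and Ldef: "L = V - K" and Kne: "K \<noteq> {}" and cK: "card K \<le> n - 2"
    and DK: "\<forall>i\<in>K. D i = M" and DL: "\<forall>l\<in>L. D l < M"
    and sLdef: "sL = (\<Sum>l\<in>L. M - D l)"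
    and c1: "card K = 1 \<longrightarrow> sL = M" and c2: "card K \<ge> 2 \<longrightarrow> sL < M"
  shows "\<exists>E w. is_tree V E \<and> (\<forall>e\<in>E. w e > 0) \<and> (\<forall>i\<in>V. Dmin V E w (V - {i}) = D i)"
proof -
  define m where "m = card K"
  have finK: "finite K" using fin KV finite_subset by blast
  have finL: "finite L" using fin Ldef by simp
  have m1: "m \<ge> 1" using Kne finK unfolding m_def by (simp add: Suc_leI card_gt_0_iff)
  have mn: "m + 2 \<le> n" using cK n3 unfolding m_def by simp
  have cL: "card L = n - m" using Ldef cV KV finK unfolding m_def by (simp add: card_Diff_subset)
  define ks where "ks = sorted_list_of_set K"
  define ls where "ls = sorted_list_of_set L"
  define vs where "vs = ks @ ls"
  have ks: "distinct ks" "set ks = K" "length ks = m" unfolding ks_def m_def using finK by auto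
  have ls: "distinct ls" "set ls = L" "length ls = n - m" unfolding ls_def using finL cL by auto
  have KL: "K \<inter> L = {}" using Ldef by auto
  have vsd: "distinct vs" unfolding vs_def using ks ls KL by auto
  have vsV: "set vs = V" unfolding vs_def using ks ls Ldef KV by auto
  have vsl: "length vs = n" unfolding vs_def using ks ls mn by simp
  have vsK: "\<And>j. j < m \<Longrightarrow> vs ! j \<in> K" unfolding vs_def using ks by (auto simp: nth_append)
  have vsL': "\<And>j. m \<le> j \<Longrightarrow> j < n \<Longrightarrow> vs ! j = ls ! (j - m)" unfolding vs_def using ks by (simp add: nth_append)
  have vsL: "\<And>j. m \<le> j \<Longrightarrow> j < n \<Longrightarrow> vs ! j \<in> L"
  proof -
    fix j assume "m \<le> j" "j < n"
    then have "j - m < length ls" using ls by simp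
    then show "vs ! j \<in> L" using vsL'[OF \<open>m \<le> j\<close> \<open>j < n\<close>] ls(2) nth_mem by metis
  qed
  have vsinj: "\<And>i j. i < n \<Longrightarrow> j < n \<Longrightarrow> vs ! i = vs ! j \<longleftrightarrow> i = j"
    using vsd vsl by (simp add: nth_eq_iff_index_eq)
  define q where "q j = (if j < m then j - 1 else if j = m then 0 else if j = m + 1 then m - 1 else 0)" for j
  have qlt: "\<And>j. 0 < j \<Longrightarrow> q j < j" unfolding q_def using m1 by auto
  have qm: "\<And>j. q j < m" unfolding q_def using m1 by auto
  define edge where "edge j = {vs ! j, vs ! (q j)}" for j
  define E where "E = {{vs!j, vs!(q j)} | j. 0 < j \<and> j < n}"
  have Eim: "E = edge ` {1..<n}" unfolding E_def edge_def by force
  have T: "is_tree V E" unfolding E_def using tree_build[OF vsd vsl _, of q] qlt n3 vsV by simp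
  have edgeE: "\<And>j. 0 < j \<Longrightarrow> j < n \<Longrightarrow> edge j \<in> E" unfolding Eim by simp
  define c where "c = (M - sL) / (real m - 1)"
  define w where "w e = (if e \<inter> L \<noteq> {} then M - D (the_elem (e \<inter> L)) else c)" for e
  have wK: "\<And>j. 0 < j \<Longrightarrow> j < m \<Longrightarrow> w (edge j) = c"
  proof -
    fix j assume j: "0 < j" "j < m"
    have "vs ! j \<notin> L" "vs ! (q j) \<notin> L" using vsK[OF j(2)] vsK[OF qm[of j]] KL by auto
    then have "edge j \<inter> L = {}" unfolding edge_def by auto
    then show "w (edge j) = c" unfolding w_def by simp
  qed
  have wL: "\<And>j. m \<le> j \<Longrightarrow> j < n \<Longrightarrow> w (edge j) = M - D (vs ! j)"
  proof -
    fix j assume j: "m \<le> j" "j < n"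
    have "vs ! j \<in> L" "vs ! (q j) \<notin> L" using vsL[OF j] vsK[OF qm[of j]] KL by auto
    then have "edge j \<inter> L = {vs ! j}" unfolding edge_def by auto
    then show "w (edge j) = M - D (vs ! j)" unfolding w_def by simp
  qed
  have wpos: "\<forall>e\<in>E. w e > 0"
  proof
    fix e assume "e \<in> E"
    then obtain j where "j \<in> {1..<n}" "e = edge j" unfolding Eim by blast
    then have j: "0 < j" "j < n" "e = edge j" by auto
    show "w e > 0"
    proof (cases "j < m")
      case True
      then have "m \<ge> 2" using j by simp
      then have "sL < M" "real m - 1 > 0" using c2 unfolding m_def by auto
      then have "c > 0" unfolding c_def by simp
      then show ?thesis using wK j True by simp
    next
      case False
      then show ?thesis using wL[of j] j vsL[of j] DL by simp
    qed
  qed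
  have inj: "inj_on edge {1..<n}"
  proof (rule inj_onI)
    fix i j assume i: "i \<in> {1..<n}" and j: "j \<in> {1..<n}" and eq: "edge i = edge j"
    have qi: "q i < n" "q j < n" using qlt i j by (metis atLeastLessThan_iff less_le_trans not_less less_one order.strict_trans)+
    from eq have "(vs!i = vs!j \<and> vs!(q i) = vs!(q j)) \<or> (vs!i = vs!(q j) \<and> vs!(q i) = vs!j)"
      unfolding edge_def by (auto simp: doubleton_eq_iff)
    then have "i = j \<or> (i = q j \<and> q i = j)" using vsinj i j qi by auto
    moreover have "q i < i" "q j < j" using qlt i j by auto
    ultimately show "i = j" by auto
  qed
  define W where "W = sum w E"
  have sumL: "(\<Sum>j\<in>{m..<n}. M - D (vs ! j)) = sL"
  proof -
    have "(\<Sum>j\<in>{m..<n}. M - D (vs ! j)) = (\<Sum>k\<in>{0..<n-m}. M - D (vs ! (k + m)))"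
      using sum.shift_bounds_nat_ivl[of "\<lambda>j. M - D (vs ! j)" 0 m "n - m"] mn by simp
    also have "\<dots> = (\<Sum>k\<in>{..<length ls}. M - D (ls ! k))"
      using vsL' ls(3) by (intro sum.cong) (auto simp: atLeast0LessThan)
    also have "\<dots> = (\<Sum>l\<in>set ls. M - D l)"
      using sum.reindex_bij_betw[OF bij_betw_nth[OF ls(1) refl refl], of "\<lambda>l. M - D l"] by simp
    finally show ?thesis using ls(2) sLdef by simp
  qed
  have WM: "W = M"
  proof -
    have "W = (\<Sum>j\<in>{1..<n}. w (edge j))" unfolding W_def Eim using sum.reindex[OF inj] by simp
    also have "\<dots> = (\<Sum>j\<in>{1..<m}. w (edge j)) + (\<Sum>j\<in>{m..<n}. w (edge j))"
      using m1 mn by (metis sum.atLeastLessThan_concat le_add1 le_trans)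
    also have "(\<Sum>j\<in>{1..<m}. w (edge j)) = (\<Sum>j\<in>{1..<m}. c)" using wK by (intro sum.cong) auto
    also have "(\<Sum>j\<in>{m..<n}. w (edge j)) = (\<Sum>j\<in>{m..<n}. M - D (vs ! j))" using wL by (intro sum.cong) auto
    finally have "W = real (m - 1) * c + sL" using sumL by simp
    moreover have "real (m - 1) * c + sL = M"
    proof (cases "m = 1")
      case True then show ?thesis using c1 unfolding m_def by simp
    next
      case False
      then have "m \<ge> 2" using m1 by simp
      then have "real (m - 1) = real m - 1" "real m - 1 > 0" by auto
      then show ?thesis unfolding c_def by simp
    qed
    ultimately show ?thesis by simp
  qed
  have Dmin_ok: "\<forall>i\<in>V. Dmin V E w (V - {i}) = D i"
  proof
    fix i assume "i \<in> V"
    then obtain k where k: "k < n" "vs ! k = i" using vsV vsl by (metis in_set_conv_nth)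
    show "Dmin V E w (V - {i}) = D i"
    proof (cases "k < m")
      case True
      define xi where "xi = (if k > 0 then k - 1 else m)"
      define yi where "yi = (if k < m - 1 then k + 1 else m + 1)"
      have xi: "xi < n" "yi < n" using True mn unfolding xi_def yi_def by auto
      have xy: "xi \<noteq> yi" using True unfolding xi_def yi_def by auto
      have ex: "{vs!k, vs!xi} \<in> E"
      proof (cases "k > 0")
        case True
        then have "edge k \<in> E" "q k = k - 1" using edgeE[of k] k \<open>k < m\<close> unfolding q_def by auto
        then show ?thesis using True unfolding xi_def edge_def by simp
      next
        case False
        then have "edge m \<in> E" "q m = 0" using edgeE[of m] m1 mn unfolding q_def by auto
        then show ?thesis using False unfolding xi_def edge_def by (simp add: insert_commute)
      qed
      have ey: "{vs!k, vs!yi} \<in> E"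
      proof (cases "k < m - 1")
        case True
        then have "edge (k+1) \<in> E" "q (k+1) = k" using edgeE[of "k+1"] mn unfolding q_def by auto
        then show ?thesis using True unfolding yi_def edge_def by (simp add: insert_commute)
      next
        case False
        then have km: "k = m - 1" using \<open>k < m\<close> by simp
        have "edge (m+1) \<in> E" "q (m+1) = m - 1" using edgeE[of "m+1"] mn unfolding q_def by auto
        then show ?thesis using False km unfolding yi_def edge_def by (simp add: insert_commute)
      qed
      have "vs ! xi \<noteq> vs ! yi" using vsinj xi xy by simp
      then have "Dmin V E w (V - {vs!k}) = W"
        unfolding W_def using A1[OF T _ ex ey] k vsV vsl by (metis nth_mem)
      moreover have "D (vs ! k) = M" using DK vsK True by simp
      ultimately show ?thesis using WM k by simp
    next
      case False
      have e0: "{vs!k, vs!(q k)} \<in> E" using edgeE[of k] k m1 False unfolding edge_def by simp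
      have uniq: "\<forall>e\<in>E. vs!k \<in> e \<longrightarrow> e = {vs!k, vs!(q k)}"
      proof (intro ballI impI)
        fix e assume e: "e \<in> E" "vs!k \<in> e"
        then obtain j where j: "0 < j" "j < n" "e = {vs!j, vs!(q j)}" unfolding E_def by auto
        have "q j < n" using qm[of j] mn by simp
        moreover have "vs!k \<noteq> vs!(q j)" using vsinj[OF k(1) \<open>q j < n\<close>] qm[of j] False by simp
        ultimately have "vs!k = vs!j" using e(2) j(3) by auto
        then have "k = j" using vsinj k j by simp
        then show "e = {vs!k, vs!(q k)}" using j by simp
      qed
      have "Dmin V E w (V - {vs!k}) = W - w {vs!k, vs!(q k)}"
        unfolding W_def using A2[OF T e0 uniq wpos] .
      moreover have "w {vs!k, vs!(q k)} = M - D (vs!k)" using wL[of k] False k unfolding edge_def by simp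
      ultimately show ?thesis using WM k by simp
    qed
  qed
  show ?thesis using T wpos Dmin_ok by blast
qed

theorem theorem3p2:
  fixes n :: nat and D :: "nat \<Rightarrow> real"
  assumes "n \<ge> 3"
    and "\<forall>i\<in>{1..n}. D i > 0"
  shows "(\<exists>E w. is_tree {1..n} E \<and> (\<forall>e\<in>E. w e > 0) \<and>
            (\<forall>i\<in>{1..n}. Dmin {1..n} E w ({1..n} - {i}) = D i))
     \<longleftrightarrow>
     ((\<forall>i\<in>{1..n}. (real n - 2) * D i \<le> (\<Sum>j\<in>{1..n} - {i}. D j))
      \<and> card {i\<in>{1..n}. (real n - 2) * D i = (\<Sum>j\<in>{1..n} - {i}. D j)} \<le> 1
      \<and> ((\<exists>i\<in>{1..n}. (real n - 2) * D i = (\<Sum>j\<in>{1..n} - {i}. D j))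
          \<or> card {i\<in>{1..n}. D i = Max (D ` {1..n})} \<ge> 2)
      \<and> card {i\<in>{1..n}. D i = Max (D ` {1..n})} \<le> n - 2)"
proof
  have fin: "finite {1..n}" by simp
  have cV: "card {1..n} = n" by simp
  assume "\<exists>E w. is_tree {1..n} E \<and> (\<forall>e\<in>E. w e > 0) \<and>
            (\<forall>i\<in>{1..n}. Dmin {1..n} E w ({1..n} - {i}) = D i)"
  then obtain E w where T: "is_tree {1..n} E" and wp: "\<forall>e\<in>E. w e > 0"
    and DD: "\<forall>i\<in>{1..n}. Dmin {1..n} E w ({1..n} - {i}) = D i" by blast
  show "(\<forall>i\<in>{1..n}. (real n - 2) * D i \<le> (\<Sum>j\<in>{1..n} - {i}. D j))
      \<and> card {i\<in>{1..n}. (real n - 2) * D i = (\<Sum>j\<in>{1..n} - {i}. D j)} \<le> 1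
      \<and> ((\<exists>i\<in>{1..n}. (real n - 2) * D i = (\<Sum>j\<in>{1..n} - {i}. D j))
          \<or> card {i\<in>{1..n}. D i = Max (D ` {1..n})} \<ge> 2)
      \<and> card {i\<in>{1..n}. D i = Max (D ` {1..n})} \<le> n - 2"
    using fwd_graph[OF T cV assms(1) wp DD] .
next
  have fin: "finite {1..n}" by simp
  have cV: "card {1..n} = n" by simp
  assume H: "(\<forall>i\<in>{1..n}. (real n - 2) * D i \<le> (\<Sum>j\<in>{1..n} - {i}. D j))
      \<and> card {i\<in>{1..n}. (real n - 2) * D i = (\<Sum>j\<in>{1..n} - {i}. D j)} \<le> 1
      \<and> ((\<exists>i\<in>{1..n}. (real n - 2) * D i = (\<Sum>j\<in>{1..n} - {i}. D j))
          \<or> card {i\<in>{1..n}. D i = Max (D ` {1..n})} \<ge> 2)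
      \<and> card {i\<in>{1..n}. D i = Max (D ` {1..n})} \<le> n - 2"
  define M where "M = Max (D ` {1..n})"
  define K where "K = {i\<in>{1..n}. D i = M}"
  define L where "L = {1..n} - K"
  define sL where "sL = (\<Sum>l\<in>L. M - D l)"
  have H1: "\<forall>i\<in>{1..n}. (real n - 2) * D i \<le> (\<Sum>j\<in>{1..n} - {i}. D j)"
    and H2: "card {i\<in>{1..n}. (real n - 2) * D i = (\<Sum>j\<in>{1..n} - {i}. D j)} \<le> 1"
    and H3: "(\<exists>i\<in>{1..n}. (real n - 2) * D i = (\<Sum>j\<in>{1..n} - {i}. D j))
          \<or> card {i\<in>{1..n}. D i = Max (D ` {1..n})} \<ge> 2"
    and H4: "card {i\<in>{1..n}. D i = Max (D ` {1..n})} \<le> n - 2" using H by blast+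
  note B = bwd_alg[OF fin cV assms(1) H1 H2 H3 M_def K_def L_def sL_def]
  have KV: "K \<subseteq> {1..n}" unfolding K_def by auto
  have cK: "card K \<le> n - 2" using H4 unfolding K_def M_def .
  have DK: "\<forall>i\<in>K. D i = M" unfolding K_def by simp
  show "\<exists>E w. is_tree {1..n} E \<and> (\<forall>e\<in>E. w e > 0) \<and>
            (\<forall>i\<in>{1..n}. Dmin {1..n} E w ({1..n} - {i}) = D i)"
    using construct[OF fin cV assms(1) KV L_def B(1) cK DK B(2) sL_def] B(4) B(5) by blast
qed

end
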